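(* Suppose that a domino, with holes $H_1$, $H_2$ and edge $xy$, is the underlying graph of some oriented graph $G$ derived from a Burling tree $(T,r,\ell,c)$. Then there exist $z\in\{x,y\}$ and $i\in\{1,2\}$ such that $z$ is the pivot of $H_i$ and $z$ is a subordinate vertex of $H_{3-i}$.
   Context: Graphs are finite, without loops or multiple edges; oriented graphs have no pair of opposite arcs. A hole is an induced cycle of length at least $4$. A domino is a graph made of an edge $xy$ and two holes $H_1,H_2$ both containing the edge $xy$, such that $V(H_1)\cap V(H_2)=\{x,y\}$ and there are no edges other than those of $H_1$ and $H_2$. In a rooted tree $T$ with root $r$, each non-root vertex $v$ has a parent $p(v)$; children, leaves, ancestors and descendants are as usual. A branch is a sequence $v_1\dots v_k$ ($k\ge0$) with $v_i$ the parent of $v_{i+1}$; it starts at $v_1$. A Burling tree is a 4-tuple $(T,r,\ell,c)$: $T$ a rooted tree with root $r$; $\ell$ assigns to each non-leaf vertex $v$ one of its children $\ell(v)$ (the last-born of $v$); $c$ assigns to every vertex $v$ that is neither the root nor a last-born the vertex-set of a (possibly empty) branch starting at $\ell(p(v))$, and $c(v)=\emptyset$ if $v$ is the root or a last-born. The oriented graph fully derived from it has vertex-set $V(T)$ and an arc $uv$ iff $v\in c(u)$; an oriented graph is derived from the Burling tree if it is an induced subgraph of the fully derived one. A hole of an oriented graph means a hole of its underlying graph. If $G$ is derived from $T$ and $H$ is a hole of $G$, then (as established in the paper) $H$ with the inherited orientation has exactly two sources, called its antennas, and exactly two sinks; exactly one of these sinks is adjacent to both antennas and is an ancestor in $T$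 of all vertices of $H$ other than the antennas: it is the pivot of $H$. A vertex of $H$ is subordinate if it is neither the pivot nor an antenna of $H$. *)

theory Defs
  imports Main
begin

text \<open>A rooted tree is given by a finite vertex set V, a root r and a parent
function p (only meaningful on non-root vertices).\<close>

definition rooted_tree :: "'a set \<Rightarrow> 'a \<Rightarrow> ('a \<Rightarrow> 'a) \<Rightarrow> bool" where
  "rooted_tree V r p \<longleftrightarrow> finite V \<and> r \<in> V \<and>
     (\<forall>v\<in>V. v \<noteq> r \<longrightarrow> p v \<in> V) \<and>
     (\<forall>v\<in>V. \<exists>n. (p ^^ n) v = r)"

definition children :: "'a set \<Rightarrow> 'a \<Rightarrow> ('a \<Rightarrow> 'a) \<Rightarrow> 'a \<Rightarrow> 'a set" where
  "children V r p v = {u \<in> V. u \<noteq> r \<and> p u = v}"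

definition is_leaf :: "'a set \<Rightarrow> 'a \<Rightarrow> ('a \<Rightarrow> 'a) \<Rightarrow> 'a \<Rightarrow> bool" where
  "is_leaf V r p v \<longleftrightarrow> children V r p v = {}"

text \<open>u is an ancestor of v (reflexive: every vertex is an ancestor of itself).\<close>
definition ancestor :: "'a set \<Rightarrow> 'a \<Rightarrow> ('a \<Rightarrow> 'a) \<Rightarrow> 'a \<Rightarrow> 'a \<Rightarrow> bool" where
  "ancestor V r p u v \<longleftrightarrow> (\<exists>vs. vs \<noteq> [] \<and> hd vs = u \<and> last vs = v \<and> set vs \<subseteq> V \<and>
      (\<forall>i. Suc i < length vs \<longrightarrow> vs ! Suc i \<noteq> r \<and> p (vs ! Suc i) = vs ! i))"

definition branch_set :: "'a set \<Rightarrow> 'a \<Rightarrow> ('a \<Rightarrow> 'a) \<Rightarrow> 'a \<Rightarrow> 'a set \<Rightarrow> bool" where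
  "branch_set V r p u B \<longleftrightarrow> B = {} \<or>
     (\<exists>vs. vs \<noteq> [] \<and> hd vs = u \<and> B = set vs \<and> set vs \<subseteq> V \<and>
      (\<forall>i. Suc i < length vs \<longrightarrow> vs ! Suc i \<noteq> r \<and> p (vs ! Suc i) = vs ! i))"

definition last_born :: "'a set \<Rightarrow> 'a \<Rightarrow> ('a \<Rightarrow> 'a) \<Rightarrow> ('a \<Rightarrow> 'a) \<Rightarrow> 'a \<Rightarrow> bool" where
  "last_born V r p l v \<longleftrightarrow> v \<in> V \<and> v \<noteq> r \<and> l (p v) = v"

definition burling_tree ::
  "'a set \<Rightarrow> 'a \<Rightarrow> ('a \<Rightarrow> 'a) \<Rightarrow> ('a \<Rightarrow> 'a) \<Rightarrow> ('a \<Rightarrow> 'a set) \<Rightarrow> bool" where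
  "burling_tree V r p l c \<longleftrightarrow> rooted_tree V r p \<and>
     (\<forall>v\<in>V. \<not> is_leaf V r p v \<longrightarrow> l v \<in> children V r p v) \<and>
     (\<forall>v\<in>V. (v = r \<or> last_born V r p l v) \<longrightarrow> c v = {}) \<and>
     (\<forall>v\<in>V. v \<noteq> r \<and> \<not> last_born V r p l v \<longrightarrow> branch_set V r p (l (p v)) (c v))"

text \<open>The oriented graph derived from the Burling tree with vertex set S (an induced
subgraph of the fully derived graph): arc u v iff v \<in> c u.\<close>
definition arc :: "('a \<Rightarrow> 'a set) \<Rightarrow> 'a set \<Rightarrow> 'a \<Rightarrow> 'a \<Rightarrow> bool" where
  "arc c S u v \<longleftrightarrow> u \<in> S \<and> v \<in> S \<and> v \<in> c u"

definition adj :: "('a \<Rightarrow> 'a set) \<Rightarrow> 'a set \<Rightarrow> 'a \<Rightarrow> 'a \<Rightarrow> bool" where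
  "adj c S u v \<longleftrightarrow> arc c S u v \<or> arc c S v u"

definition hole :: "('a \<Rightarrow> 'a set) \<Rightarrow> 'a set \<Rightarrow> 'a set \<Rightarrow> bool" where
  "hole c S H \<longleftrightarrow> H \<subseteq> S \<and>
     (\<exists>vs. distinct vs \<and> length vs \<ge> 4 \<and> set vs = H \<and>
        (\<forall>i < length vs. adj c S (vs ! i) (vs ! ((i + 1) mod length vs))) \<and>
        (\<forall>u\<in>H. \<forall>v\<in>H. adj c S u v \<longrightarrow>
           (\<exists>i < length vs. {u, v} = {vs ! i, vs ! ((i + 1) mod length vs)})))"

definition is_domino :: "('a \<Rightarrow> 'a set) \<Rightarrow> 'a set \<Rightarrow> 'a set \<Rightarrow> 'a set \<Rightarrow> 'a \<Rightarrow> 'a \<Rightarrow> bool" where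
  "is_domino c S H1 H2 x y \<longleftrightarrow>
     S = H1 \<union> H2 \<and> hole c S H1 \<and> hole c S H2 \<and> x \<noteq> y \<and> adj c S x y \<and>
     H1 \<inter> H2 = {x, y} \<and>
     (\<forall>u v. adj c S u v \<longrightarrow> ({u, v} \<subseteq> H1 \<or> {u, v} \<subseteq> H2))"

definition hole_source :: "('a \<Rightarrow> 'a set) \<Rightarrow> 'a set \<Rightarrow> 'a set \<Rightarrow> 'a \<Rightarrow> bool" where
  "hole_source c S H v \<longleftrightarrow> v \<in> H \<and> \<not> (\<exists>u\<in>H. arc c S u v)"

definition hole_sink :: "('a \<Rightarrow> 'a set) \<Rightarrow> 'a set \<Rightarrow> 'a set \<Rightarrow> 'a \<Rightarrow> bool" where
  "hole_sink c S H v \<longleftrightarrow> v \<in> H \<and> \<not> (\<exists>u\<in>H. arc c S v u)"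

abbreviation antenna :: "('a \<Rightarrow> 'a set) \<Rightarrow> 'a set \<Rightarrow> 'a set \<Rightarrow> 'a \<Rightarrow> bool" where
  "antenna c S H v \<equiv> hole_source c S H v"

definition pivot ::
  "'a set \<Rightarrow> 'a \<Rightarrow> ('a \<Rightarrow> 'a) \<Rightarrow> ('a \<Rightarrow> 'a set) \<Rightarrow> 'a set \<Rightarrow> 'a set \<Rightarrow> 'a \<Rightarrow> bool" where
  "pivot V r p c S H z \<longleftrightarrow> hole_sink c S H z \<and>
     (\<forall>a. antenna c S H a \<longrightarrow> adj c S z a) \<and>
     (\<forall>v\<in>H. \<not> antenna c S H v \<longrightarrow> ancestor V r p z v)"

definition subordinate ::
  "'a set \<Rightarrow> 'a \<Rightarrow> ('a \<Rightarrow> 'a) \<Rightarrow> ('a \<Rightarrow> 'a set) \<Rightarrow> 'a set \<Rightarrow> 'a set \<Rightarrow> 'a \<Rightarrow> bool" where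
  "subordinate V r p c S H v \<longleftrightarrow> v \<in> H \<and> \<not> antenna c S H v \<and> \<not> pivot V r p c S H v"

end

theory Submission
  imports Defs
begin



locale BT =
  fixes V :: "'a set" and r :: 'a and p l :: "'a \<Rightarrow> 'a" and c :: "'a \<Rightarrow> 'a set" and S :: "'a set"
  assumes bt: "burling_tree V r p l c" and SV: "S \<subseteq> V"
begin

lemma rt: "rooted_tree V r p" using bt by (simp add: burling_tree_def)
lemma rV: "r \<in> V" using rt by (simp add: rooted_tree_def)
lemma pV: "v \<in> V \<Longrightarrow> v \<noteq> r \<Longrightarrow> p v \<in> V" using rt by (simp add: rooted_tree_def)
lemma reach: "v \<in> V \<Longrightarrow> \<exists>n. (p^^n) v = r" using rt by (simp add: rooted_tree_def)

definition dep where "dep v = (LEAST n. (p^^n) v = r)"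

lemma funpow_Suc': "(p^^(Suc i)) v = (p^^i) (p v)"
  by (simp only: funpow_Suc_right comp_apply)

lemma funpow_add': "(p^^(a+b)) v = (p^^a) ((p^^b) v)"
  by (simp add: funpow_add)

lemma funpow_sub': "a \<le> b \<Longrightarrow> (p^^b) v = (p^^(b-a)) ((p^^a) v)"
  by (metis funpow_add' le_add_diff_inverse2)

lemma dep_p: assumes "v \<in> V" "v \<noteq> r" shows "dep v = Suc (dep (p v))"
proof -
  obtain n where n: "(p^^n) v = r" using reach assms(1) by blast
  have d: "(p^^(dep v)) v = r" unfolding dep_def using n by (rule LeastI)
  have "dep v \<noteq> 0" using d assms(2) by (metis funpow_0)
  then obtain d' where dd: "dep v = Suc d'" by (cases "dep v") auto
  have 1: "(p^^d') (p v) = r" using d dd by (simp only: funpow_Suc')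
  have 2: "\<And>k. (p^^k) (p v) = r \<Longrightarrow> d' \<le> k"
  proof -
    fix k assume "(p^^k) (p v) = r"
    then have "(p^^(Suc k)) v = r" by (simp only: funpow_Suc')
    then have "dep v \<le> Suc k" unfolding dep_def by (rule Least_le)
    then show "d' \<le> k" using dd by simp
  qed
  have "dep (p v) = d'" unfolding dep_def
    by (rule Least_equality) (use 1 2 in auto)
  then show ?thesis using dd by simp
qed

definition anc where "anc u v \<longleftrightarrow> v \<in> V \<and> (\<exists>k. u = (p^^k) v \<and> (\<forall>i<k. (p^^i) v \<noteq> r))"

lemma iter_V: "v \<in> V \<Longrightarrow> \<forall>i<k. (p^^i) v \<noteq> r \<Longrightarrow> (p^^k) v \<in> V"
  by (induction k) (auto intro: pV)

lemma iter_dep: "v \<in> V \<Longrightarrow> \<forall>i<k. (p^^i) v \<noteq> r \<Longrightarrow> dep v = dep ((p^^k) v) + k"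
proof (induction k)
  case 0 then show ?case by simp
next
  case (Suc k)
  have a: "(p^^k) v \<in> V" using Suc.prems by (intro iter_V) auto
  have b: "(p^^k) v \<noteq> r" using Suc.prems by auto
  have "dep v = dep ((p^^k) v) + k" using Suc by auto
  also have "dep ((p^^k) v) = Suc (dep (p ((p^^k) v)))" using a b by (rule dep_p)
  finally show ?case by simp
qed

lemma anc_V: "anc u v \<Longrightarrow> u \<in> V \<and> v \<in> V"
  unfolding anc_def using iter_V by blast

lemma anc_refl: "v \<in> V \<Longrightarrow> anc v v"
  unfolding anc_def by (rule conjI, assumption, rule exI[of _ 0]) simp

lemma anc_dep: assumes "anc u v" shows "dep u \<le> dep v" and "dep u = dep v \<Longrightarrow> u = v"
proof -
  obtain k where k: "v \<in> V" "u = (p^^k) v" "\<forall>i<k. (p^^i) v \<noteq> r" using assms unfolding anc_def by blast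
  have e: "dep v = dep u + k" using iter_dep[OF k(1) k(3)] k(2) by simp
  then show "dep u \<le> dep v" by simp
  assume "dep u = dep v" then have "k = 0" using e by simp
  then show "u = v" using k by simp
qed

lemma anc_exp: assumes "anc u v" obtains k where "u = (p^^k) v" "\<forall>i<k. (p^^i) v \<noteq> r" "dep v = dep u + k" "v \<in> V"
proof -
  obtain k where k: "v \<in> V" "u = (p^^k) v" "\<forall>i<k. (p^^i) v \<noteq> r" using assms unfolding anc_def by blast
  have e: "dep v = dep u + k" using iter_dep[OF k(1) k(3)] k(2) by simp
  show ?thesis using that k e by blast
qed

lemma anc_antisym: "anc u v \<Longrightarrow> anc v u \<Longrightarrow> u = v"
  using anc_dep by (meson le_antisym)

lemma anc_trans: assumes "anc u v" "anc v w" shows "anc u w"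
proof -
  obtain k1 where k1: "u = (p^^k1) v" "\<forall>i<k1. (p^^i) v \<noteq> r" using assms(1) unfolding anc_def by blast
  obtain k2 where k2: "w \<in> V" "v = (p^^k2) w" "\<forall>i<k2. (p^^i) w \<noteq> r" using assms(2) unfolding anc_def by blast
  have "u = (p^^(k1+k2)) w" using k1 k2 by (simp add: funpow_add)
  moreover have "\<forall>i<k1+k2. (p^^i) w \<noteq> r"
  proof (intro allI impI)
    fix i assume i: "i < k1 + k2"
    show "(p^^i) w \<noteq> r"
    proof (cases "i < k2")
      case True then show ?thesis using k2 by auto
    next
      case False
      then have "(p^^i) w = (p^^(i-k2)) v" using k2(2) funpow_sub'[of k2 i w] by simp
      then show ?thesis using k1 i False by auto
    qed
  qed
  ultimately show ?thesis unfolding anc_def using k2(1) by blast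
qed

lemma anc_parent: "v \<in> V \<Longrightarrow> v \<noteq> r \<Longrightarrow> anc (p v) v"
  unfolding anc_def by (intro conjI, assumption, intro exI[of _ 1]) auto

lemma anc_strict: assumes "anc u v" "u \<noteq> v" shows "anc u (p v)" "v \<noteq> r"
proof -
  obtain k where k: "v \<in> V" "u = (p^^k) v" "\<forall>i<k. (p^^i) v \<noteq> r" using assms unfolding anc_def by blast
  have "k \<noteq> 0" using k assms(2) by (metis funpow_0)
  then obtain k' where kk: "k = Suc k'" by (cases k) auto
  show vr: "v \<noteq> r" using k kk by (metis funpow_0 zero_less_Suc)
  have "u = (p^^k') (p v)" using k kk funpow_Suc' by metis
  moreover have "\<forall>i<k'. (p^^i) (p v) \<noteq> r" using k kk by (metis Suc_mono funpow_Suc')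
  ultimately show "anc u (p v)" unfolding anc_def using pV[OF k(1) vr] by blast
qed

lemma anc_chain: assumes "anc u s" "anc w s" shows "anc u w \<or> anc w u"
proof -
  obtain a where a: "s \<in> V" "u = (p^^a) s" "\<forall>i<a. (p^^i) s \<noteq> r" using assms(1) unfolding anc_def by blast
  obtain b where b: "w = (p^^b) s" "\<forall>i<b. (p^^i) s \<noteq> r" using assms(2) unfolding anc_def by blast
  show ?thesis
  proof (cases "a \<le> b")
    case True
    have "w = (p^^(b-a)) u" using a b True funpow_sub' by blast
    moreover have "\<forall>i<b-a. (p^^i) u \<noteq> r"
      using a b True by (metis add.commute funpow_add less_diff_conv o_apply)
    moreover have "u \<in> V" using a iter_V by blast
    ultimately show ?thesis unfolding anc_def by blast
  next
    case False
    have "u = (p^^(a-b)) w" using a b False funpow_sub'[of b a s] by simp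
    moreover have "\<forall>i<a-b. (p^^i) w \<noteq> r"
      using a b False by (metis add.commute funpow_add less_diff_conv o_apply)
    moreover have "w \<in> V" using a b iter_V by blast
    ultimately show ?thesis unfolding anc_def by blast
  qed
qed

end


context BT begin

lemma list_iter:
  assumes "vs \<noteq> []" "set vs \<subseteq> V"
    "\<forall>i. Suc i < length vs \<longrightarrow> vs ! Suc i \<noteq> r \<and> p (vs ! Suc i) = vs ! i"
  shows "\<forall>d < length vs. vs ! (length vs - 1 - d) = (p^^d) (last vs)"
    "\<forall>i < length vs - 1. (p^^i) (last vs) \<noteq> r"
proof -
  show A: "\<forall>d < length vs. vs ! (length vs - 1 - d) = (p^^d) (last vs)"
  proof (intro allI impI)
    fix d assume "d < length vs"
    then show "vs ! (length vs - 1 - d) = (p^^d) (last vs)"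
    proof (induction d)
      case 0 then show ?case using assms(1) by (simp add: last_conv_nth)
    next
      case (Suc d)
      define j where "j = length vs - 1 - Suc d"
      have jj: "Suc j = length vs - 1 - d" "Suc j < length vs" using Suc.prems unfolding j_def by auto
      have "vs ! Suc j = (p^^d) (last vs)" using Suc jj by simp
      moreover have "p (vs ! Suc j) = vs ! j" using assms(3) jj by blast
      ultimately show ?case unfolding j_def[symmetric] by simp
    qed
  qed
  show "\<forall>i < length vs - 1. (p^^i) (last vs) \<noteq> r"
  proof (intro allI impI)
    fix i assume i: "i < length vs - 1"
    have e: "length vs - 1 - i = Suc (length vs - 2 - i)" using i by simp
    have "(p^^i) (last vs) = vs ! (length vs - 1 - i)" using A i by simp
    then have "(p^^i) (last vs) = vs ! (Suc (length vs - 2 - i))" using e by simp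
    moreover have "Suc (length vs - 2 - i) < length vs" using i by auto
    ultimately show "(p^^i) (last vs) \<noteq> r" using assms(3) by metis
  qed
qed

lemma ancestor_anc: "ancestor V r p u v \<longleftrightarrow> anc u v"
proof
  assume "ancestor V r p u v"
  then obtain vs where vs: "vs \<noteq> []" "hd vs = u" "last vs = v" "set vs \<subseteq> V"
    "\<forall>i. Suc i < length vs \<longrightarrow> vs ! Suc i \<noteq> r \<and> p (vs ! Suc i) = vs ! i"
    unfolding ancestor_def by blast
  note L = list_iter[OF vs(1) vs(4) vs(5)]
  have "vs ! (length vs - 1 - (length vs - 1)) = (p^^(length vs - 1)) (last vs)"
    using L(1) vs(1) by (metis diff_less length_greater_0_conv zero_less_one)
  then have "u = (p^^(length vs - 1)) v" using vs(1,2,3) by (simp add: hd_conv_nth)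
  moreover have "v \<in> V" using vs by auto
  ultimately show "anc u v" unfolding anc_def using L(2) vs(3) by blast
next
  assume "anc u v"
  then obtain k where k: "v \<in> V" "u = (p^^k) v" "\<forall>i<k. (p^^i) v \<noteq> r" unfolding anc_def by blast
  define vs where "vs = map (\<lambda>i. (p^^(k-i)) v) [0..<Suc k]"
  have "vs \<noteq> []" unfolding vs_def by simp
  moreover have "hd vs = u" unfolding vs_def using k by (simp del: upt_Suc add: hd_map upt_conv_Cons)
  moreover have "last vs = v" unfolding vs_def by simp
  moreover have "set vs \<subseteq> V" unfolding vs_def using k iter_V by auto
  moreover have "\<forall>i. Suc i < length vs \<longrightarrow> vs ! Suc i \<noteq> r \<and> p (vs ! Suc i) = vs ! i"
  proof (intro allI impI)
    fix i assume i: "Suc i < length vs"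
    then have i': "Suc i < Suc k" unfolding vs_def by simp
    have "vs ! Suc i = (p^^(k - Suc i)) v" "vs ! i = (p^^(k - i)) v" using i' unfolding vs_def
      by (simp_all del: upt_Suc add: nth_map)
    moreover have "k - i = Suc (k - Suc i)" using i' by simp
    ultimately show "vs ! Suc i \<noteq> r \<and> p (vs ! Suc i) = vs ! i" using k(3) i' by auto
  qed
  ultimately show "ancestor V r p u v" unfolding ancestor_def by blast
qed

abbreviation L where "L t \<equiv> l (p t)"

lemma BR: assumes "t \<in> V" "c t \<noteq> {}"
  shows "t \<noteq> r" "L t \<noteq> t" "L t \<in> V" "L t \<noteq> r" "p (L t) = p t"
    "\<exists>s0 K. s0 \<in> V \<and> (\<forall>i<K. (p^^i) s0 \<noteq> r) \<and> L t = (p^^K) s0 \<and> c t = {(p^^e) s0 | e. e \<le> K}"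
proof -
  have B: "\<forall>v\<in>V. \<not> is_leaf V r p v \<longrightarrow> l v \<in> children V r p v"
    "\<forall>v\<in>V. (v = r \<or> last_born V r p l v) \<longrightarrow> c v = {}"
    "\<forall>v\<in>V. v \<noteq> r \<and> \<not> last_born V r p l v \<longrightarrow> branch_set V r p (l (p v)) (c v)"
    using bt unfolding burling_tree_def by blast+
  show tr: "t \<noteq> r" using B(2) assms by blast
  have nlb: "\<not> last_born V r p l t" using B(2) assms by blast
  then show "L t \<noteq> t" using tr assms unfolding last_born_def by blast
  have ptV: "p t \<in> V" using pV assms tr by blast
  have "t \<in> children V r p (p t)" using assms tr unfolding children_def by blast
  then have "\<not> is_leaf V r p (p t)" unfolding is_leaf_def by blast
  then have ch: "L t \<in> children V r p (p t)" using B(1) ptV by blast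
  then show "L t \<in> V" "L t \<noteq> r" "p (L t) = p t" unfolding children_def by auto
  have "branch_set V r p (L t) (c t)" using B(3) assms tr nlb by blast
  then obtain vs where vs: "vs \<noteq> []" "hd vs = L t" "c t = set vs" "set vs \<subseteq> V"
    "\<forall>i. Suc i < length vs \<longrightarrow> vs ! Suc i \<noteq> r \<and> p (vs ! Suc i) = vs ! i"
    using assms(2) unfolding branch_set_def by blast
  note LI = list_iter[OF vs(1) vs(4) vs(5)]
  define K where "K = length vs - 1"
  have "vs ! (length vs - 1 - (length vs - 1)) = (p^^(length vs - 1)) (last vs)"
    using LI(1) vs(1) by (metis diff_less length_greater_0_conv zero_less_one)
  then have "L t = (p^^K) (last vs)" using vs(1,2) unfolding K_def by (simp add: hd_conv_nth)
  moreover have "c t = {(p^^e) (last vs) | e. e \<le> K}"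
  proof -
    have "set vs = {vs ! j | j. j < length vs}" by (auto simp: in_set_conv_nth)
    also have "\<dots> = {(p^^e) (last vs) | e. e \<le> K}"
    proof (rule set_eqI, rule iffI)
      fix x assume "x \<in> {vs ! j | j. j < length vs}"
      then obtain j where j: "x = vs ! j" "j < length vs" by blast
      have "length vs - 1 - j < length vs" using j by simp
      then have "vs ! (length vs - 1 - (length vs - 1 - j)) = (p^^(length vs - 1 - j)) (last vs)"
        using LI(1) by blast
      moreover have "length vs - 1 - (length vs - 1 - j) = j" using j by simp
      ultimately have "x = (p^^(length vs - 1 - j)) (last vs)" using j by simp
      then show "x \<in> {(p^^e) (last vs) | e. e \<le> K}" unfolding K_def by auto
    next
      fix x assume "x \<in> {(p^^e) (last vs) | e. e \<le> K}"
      then obtain e where e: "x = (p^^e) (last vs)" "e \<le> K" by blast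
      have el: "e < length vs" using e(2) vs(1) unfolding K_def by (cases vs) auto
      then have "x = vs ! (length vs - 1 - e)" "length vs - 1 - e < length vs"
        using LI(1) e(1) by auto
      then show "x \<in> {vs ! j | j. j < length vs}" by blast
    qed
    finally show ?thesis using vs(3) by simp
  qed
  moreover have "last vs \<in> V" using vs by auto
  ultimately show "\<exists>s0 K. s0 \<in> V \<and> (\<forall>i<K. (p^^i) s0 \<noteq> r) \<and> L t = (p^^K) s0 \<and> c t = {(p^^e) s0 | e. e \<le> K}"
    using LI(2) unfolding K_def by blast
qed

end


context BT begin

lemma C_struct: assumes "t \<in> V" "c t \<noteq> {}"
  shows "\<exists>s0. (\<forall>s\<in>c t. anc s s0 \<and> anc (L t) s) \<and> (\<forall>u. anc (L t) u \<and> anc u s0 \<longrightarrow> u \<in> c t)"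
proof -
  obtain s0 K where sK: "s0 \<in> V" "\<forall>i<K. (p^^i) s0 \<noteq> r" "L t = (p^^K) s0" "c t = {(p^^e) s0 | e. e \<le> K}"
    using BR(6)[OF assms] by blast
  have 1: "\<forall>s\<in>c t. anc s s0 \<and> anc (L t) s"
  proof
    fix s assume "s \<in> c t"
    then obtain e where e: "s = (p^^e) s0" "e \<le> K" using sK(4) by blast
    have "anc s s0" unfolding anc_def using sK e by (intro conjI exI[of _ e]) auto
    moreover have "anc (L t) s"
    proof -
      have "L t = (p^^(K-e)) s" using sK(3) funpow_sub'[OF e(2), of s0] e(1) by simp
      moreover have "\<forall>i<K-e. (p^^i) s \<noteq> r"
      proof (intro allI impI)
        fix i assume "i < K - e"
        then have "i + e < K" by simp
        then have "(p^^(i+e)) s0 \<noteq> r" using sK(2) by blast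
        then show "(p^^i) s \<noteq> r" using e(1) funpow_add'[of i e s0] by simp
      qed
      moreover have "s \<in> V" using e sK iter_V by auto
      ultimately show ?thesis unfolding anc_def by blast
    qed
    ultimately show "anc s s0 \<and> anc (L t) s" by blast
  qed
  have 2: "\<forall>u. anc (L t) u \<and> anc u s0 \<longrightarrow> u \<in> c t"
  proof (intro allI impI)
    fix u assume u: "anc (L t) u \<and> anc u s0"
    obtain a where a: "u = (p^^a) s0" "dep s0 = dep u + a" using anc_exp u by metis
    have "dep s0 = dep (L t) + K" using iter_dep[OF sK(1) sK(2)] sK(3) by simp
    moreover have "dep (L t) \<le> dep u" using anc_dep u by blast
    ultimately have "a \<le> K" using a by simp
    then show "u \<in> c t" using a sK(4) by blast
  qed
  show ?thesis using 1 2 by blast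
qed

lemma arcV: "arc c S t s \<Longrightarrow> t \<in> V \<and> s \<in> V \<and> t \<in> S \<and> s \<in> S \<and> s \<in> c t"
  unfolding arc_def using SV by auto

lemma arc_anc: assumes "arc c S t s" shows "anc (L t) s"
  using C_struct arcV[OF assms] by blast

lemma dep_L: assumes "arc c S t s" shows "dep (L t) = dep t"
proof -
  have tV: "t \<in> V" and ne: "c t \<noteq> {}" using arcV[OF assms] by auto
  note B = BR[OF tV ne]
  have "dep (L t) = Suc (dep (p (L t)))" using B by (intro dep_p) auto
  also have "\<dots> = Suc (dep (p t))" using B by simp
  also have "\<dots> = dep t" using dep_p[OF tV B(1)] by simp
  finally show ?thesis .
qed

lemma arc_dep: assumes "arc c S t s" shows "dep t \<le> dep s" "dep t = dep s \<Longrightarrow> c s = {}"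
proof -
  have a: "anc (L t) s" using arc_anc[OF assms] .
  show "dep t \<le> dep s" using anc_dep(1)[OF a] dep_L[OF assms] by simp
  assume "dep t = dep s"
  then have e: "s = L t" using anc_dep(2)[OF a] dep_L[OF assms] by simp
  have tV: "t \<in> V" and ne: "c t \<noteq> {}" using arcV[OF assms] by auto
  note B = BR[OF tV ne]
  have "last_born V r p l s" unfolding last_born_def using B e by simp
  moreover have "s \<in> V" using B e by simp
  moreover have "\<forall>v\<in>V. (v = r \<or> last_born V r p l v) \<longrightarrow> c v = {}"
    using bt unfolding burling_tree_def by blast
  ultimately show "c s = {}" by blast
qed

lemma INC: assumes "arc c S u v" shows "\<not> anc u v" "\<not> anc v u"
proof -
  have a: "anc (L u) v" using arc_anc[OF assms] .
  have d: "dep (L u) = dep u" using dep_L[OF assms] .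
  have uV: "u \<in> V" and ne: "c u \<noteq> {}" using arcV[OF assms] by auto
  have ne2: "L u \<noteq> u" using BR[OF uV ne] by simp
  show "\<not> anc v u"
  proof
    assume "anc v u"
    then have "anc (L u) u" using a anc_trans by blast
    then show False using anc_dep(2) d ne2 by metis
  qed
  show "\<not> anc u v"
  proof
    assume "anc u v"
    then have "anc u (L u) \<or> anc (L u) u" using a anc_chain by blast
    then show False using anc_dep(2) d ne2 by metis
  qed
qed

lemma adj_inc: assumes "adj c S u v" shows "\<not> anc u v" "\<not> anc v u"
  using assms INC unfolding adj_def by blast+

lemma adj_neq: assumes "adj c S u v" shows "u \<noteq> v"
proof
  assume "u = v"
  moreover have "u \<in> V" using assms arcV unfolding adj_def by blast
  ultimately show False using adj_inc[OF assms] anc_refl by blast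
qed

lemma CMP: assumes "arc c S t v" "arc c S t w" shows "anc v w \<or> anc w v"
proof -
  have tV: "t \<in> V" and ne: "c t \<noteq> {}" and v: "v \<in> c t" and w: "w \<in> c t"
    using arcV[OF assms(1)] arcV[OF assms(2)] by auto
  obtain s0 where "\<forall>s\<in>c t. anc s s0 \<and> anc (L t) s" using C_struct[OF tV ne] by blast
  then show ?thesis using v w anc_chain by blast
qed

lemma SEP: assumes "u \<in> S" "anc u s" "\<not> anc u t" "adj c S s t"
  shows "s = u \<or> (arc c S t u \<and> arc c S t s)"
proof (cases "arc c S s t")
  case True
  have sV: "s \<in> V" and ne: "c s \<noteq> {}" using arcV[OF True] by auto
  note B = BR[OF sV ne]
  show ?thesis
  proof (rule ccontr)
    assume "\<not> ?thesis"
    then have "s \<noteq> u" by blast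
    then have 1: "anc u (p s)" using anc_strict assms(2) by metis
    have 2: "anc (p s) (L s)" using anc_parent[of "L s"] B by simp
    have 3: "anc (L s) t" using arc_anc[OF True] .
    have "anc u t" using 1 2 3 anc_trans by blast
    then show False using assms(3) by blast
  qed
next
  case False
  then have A: "arc c S t s" using assms(4) unfolding adj_def by blast
  have tV: "t \<in> V" and ne: "c t \<noteq> {}" and tS: "t \<in> S" using arcV[OF A] by auto
  note B = BR[OF tV ne]
  obtain s0 where s0: "\<forall>s\<in>c t. anc s s0 \<and> anc (L t) s" "\<forall>u. anc (L t) u \<and> anc u s0 \<longrightarrow> u \<in> c t"
    using C_struct[OF tV ne] by blast
  have sc: "s \<in> c t" using arcV[OF A] by simp
  have a1: "anc (L t) s" using s0 sc by blast
  have "anc (L t) u"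
  proof -
    have "anc u (L t) \<or> anc (L t) u" using anc_chain[OF assms(2) a1] .
    moreover have "\<not> (anc u (L t) \<and> u \<noteq> L t)"
    proof
      assume h: "anc u (L t) \<and> u \<noteq> L t"
      then have "anc u (p (L t))" using anc_strict by blast
      then have "anc u (p t)" using B by simp
      moreover have "anc (p t) t" using anc_parent tV B by blast
      ultimately show False using anc_trans assms(3) by blast
    qed
    moreover have "u \<in> V" using assms(1) SV by blast
    ultimately show ?thesis using anc_refl by blast
  qed
  moreover have "anc u s0" using assms(2) s0 sc anc_trans by blast
  ultimately have "u \<in> c t" using s0 by blast
  then have "arc c S t u" unfolding arc_def using assms(1) tS by blast
  then show ?thesis using A by blast
qed

lemma DC: assumes "finite X" "X \<noteq> {}" "\<forall>v\<in>X. \<exists>w\<in>X. arc c S v w" shows False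
proof -
  define m where "m = Max (dep ` X)"
  have "m \<in> dep ` X" unfolding m_def using assms by simp
  then obtain v where v: "v \<in> X" "dep v = m" by blast
  obtain w where w: "w \<in> X" "arc c S v w" using assms(3) v by blast
  obtain w' where w': "w' \<in> X" "arc c S w w'" using assms(3) w by blast
  have "dep w \<le> m" unfolding m_def using assms w by simp
  then have "dep v = dep w" using arc_dep(1)[OF w(2)] v by simp
  then have "c w = {}" using arc_dep(2)[OF w(2)] by simp
  then show False using w' arcV by blast
qed

lemma ORI: "arc c S u v \<Longrightarrow> \<not> arc c S v u"
proof
  assume "arc c S u v" "arc c S v u"
  then show False using DC[of "{u,v}"] by auto
qed

lemma TF: assumes "adj c S u v" "adj c S v w" "adj c S u w" shows False
proof -
  have D: "\<not> (arc c S a b \<and> arc c S b d \<and> arc c S d a)" for a b d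
  proof
    assume "arc c S a b \<and> arc c S b d \<and> arc c S d a"
    then show False using DC[of "{a,b,d}"] by auto
  qed
  have I: "\<not> (arc c S a b \<and> arc c S a d \<and> adj c S b d)" for a b d
  proof
    assume h: "arc c S a b \<and> arc c S a d \<and> adj c S b d"
    then have "anc b d \<or> anc d b" using CMP by blast
    then show False using adj_inc h by blast
  qed
  have I2: "\<not> (arc c S a b \<and> arc c S a d)" if "adj c S b d" for a b d
    using I that by blast
  have s: "adj c S w v" "adj c S w u" "adj c S v u" using assms unfolding adj_def by blast+
  have o: "(arc c S u v \<or> arc c S v u) \<and> (arc c S v w \<or> arc c S w v) \<and> (arc c S u w \<or> arc c S w u)"
    using assms unfolding adj_def by blast
  show False using o D[of u v w] D[of u w v] I2[OF assms(1), of w] I2[OF s(3), of w] I2[OF assms(2), of u]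
    I2[OF s(1), of u] I2[OF assms(3), of v] I2[OF s(2), of v] by blast
qed

end



lemma nx_eq: assumes "i < (n::nat)" shows "(i + 1) mod n = (if i + 1 < n then i + 1 else 0)"
proof (cases "i + 1 < n")
  case True
  have "(i + 1) mod n = i + 1" using True by (rule mod_less)
  then show ?thesis using True by presburger
next
  case False then have "i + 1 = n" using assms by arith
  then have "(i + 1) mod n = 0" by (simp only: mod_self)
  then show ?thesis using False by presburger
qed

lemma pv_eq: assumes "i < (n::nat)" shows "(i + n - 1) mod n = (if i = 0 then n - 1 else i - 1)"
proof (cases "i = 0")
  case True
  have "n - 1 < n" using assms by arith
  then have "(n - 1) mod n = n - 1" by (rule mod_less)
  then show ?thesis using True by simp
next
  case False
  have e: "i + n - 1 = (i - 1) + n" using False by simp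
  have "((i - 1) + n) mod n = i - 1" using assms by simp
  then show ?thesis using e False by simp
qed

lemma mod_cancel: assumes "a < (n::nat)" "b < n" "(j + a) mod n = (j + b) mod n" shows "a = b"
proof -
  have "int ((j + a) mod n) = int ((j + b) mod n)" using assms(3) by simp
  then have "(int j + int a) mod int n = (int j + int b) mod int n" by (simp add: zmod_int)
  then have "int n dvd (int j + int a) - (int j + int b)" by (simp only: mod_eq_dvd_iff)
  then have "int n dvd int a - int b" by simp
  then have "int a mod int n = int b mod int n" by (simp only: mod_eq_dvd_iff)
  then show ?thesis using assms(1,2) by simp
qed

lemma mod_back: assumes "j < (n::nat)" "k < n" shows "(j + (k + n - j) mod n) mod n = k"
proof -
  have "(j + (k + n - j) mod n) mod n = (j + (k + n - j)) mod n" by (simp add: mod_add_right_eq)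
  also have "j + (k + n - j) = k + n" using assms by simp
  finally show ?thesis using assms by simp
qed

lemma seg_all: assumes "P t0" "t0 < (k::nat)" "\<forall>t. Suc t < k \<longrightarrow> (P t \<longleftrightarrow> P (Suc t))" shows "\<forall>t<k. P t"
proof -
  have "\<forall>t<k. P t \<longleftrightarrow> P 0"
  proof (intro allI impI)
    fix t assume "t < k" then show "P t \<longleftrightarrow> P 0"
      by (induction t) (use assms(3) in auto)
  qed
  then show ?thesis using assms(1,2) by blast
qed

definition hl where "hl c S H vs \<longleftrightarrow> H \<subseteq> S \<and> distinct vs \<and> length vs \<ge> 4 \<and> set vs = H \<and>
        (\<forall>i < length vs. adj c S (vs ! i) (vs ! ((i + 1) mod length vs))) \<and>
        (\<forall>u\<in>H. \<forall>v\<in>H. adj c S u v \<longrightarrow>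
           (\<exists>i < length vs. {u, v} = {vs ! i, vs ! ((i + 1) mod length vs)}))"

lemma hole_hl: "hole c S H \<Longrightarrow> \<exists>vs. hl c S H vs"
  unfolding hole_def hl_def by blast

lemma adj_sym: "adj c S u v \<longleftrightarrow> adj c S v u" unfolding adj_def by blast

lemma NB: assumes "hl c S H vs" "i < length vs"
  shows "\<forall>w\<in>H. adj c S (vs ! i) w \<longleftrightarrow> w = vs ! ((i + 1) mod length vs) \<or> w = vs ! ((i + length vs - 1) mod length vs)"
    "vs ! ((i + 1) mod length vs) \<noteq> vs ! ((i + length vs - 1) mod length vs)"
    "vs ! ((i + 1) mod length vs) \<in> H" "vs ! ((i + length vs - 1) mod length vs) \<in> H"
proof -
  let ?n = "length vs"
  have H: "distinct vs" "?n \<ge> 4" "set vs = H"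
     "\<forall>i < ?n. adj c S (vs ! i) (vs ! ((i + 1) mod ?n))"
     "\<forall>u\<in>H. \<forall>v\<in>H. adj c S u v \<longrightarrow> (\<exists>i < ?n. {u, v} = {vs ! i, vs ! ((i + 1) mod ?n)})"
    using assms(1) unfolding hl_def by auto
  have n0: "?n > 0" using H(2) by linarith
  show "vs ! ((i + 1) mod ?n) \<in> H" "vs ! ((i + ?n - 1) mod ?n) \<in> H" using H(3) n0 by auto
  have i1: "(i + 1) mod ?n \<noteq> (i + ?n - 1) mod ?n" using assms(2) H(2) nx_eq[OF assms(2)] pv_eq[OF assms(2)]
    by (auto split: if_splits)
  then show "vs ! ((i + 1) mod ?n) \<noteq> vs ! ((i + ?n - 1) mod ?n)"
    using H(1) n0 by (simp add: nth_eq_iff_index_eq)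
  show "\<forall>w\<in>H. adj c S (vs ! i) w \<longleftrightarrow> w = vs ! ((i + 1) mod ?n) \<or> w = vs ! ((i + ?n - 1) mod ?n)"
  proof (intro ballI iffI)
    fix w assume w: "w \<in> H" "adj c S (vs ! i) w"
    have viH: "vs ! i \<in> H" using H(3) assms(2) by auto
    obtain k where k: "k < ?n" "{vs ! i, w} = {vs ! k, vs ! ((k + 1) mod ?n)}" using H(5) viH w by blast
    have kk: "(k + 1) mod ?n < ?n" using n0 by simp
    from k(2) have "(vs ! i = vs ! k \<and> w = vs ! ((k + 1) mod ?n)) \<or> (vs ! i = vs ! ((k + 1) mod ?n) \<and> w = vs ! k)"
      by (auto simp: doubleton_eq_iff)
    then show "w = vs ! ((i + 1) mod ?n) \<or> w = vs ! ((i + ?n - 1) mod ?n)"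
    proof
      assume h: "vs ! i = vs ! k \<and> w = vs ! ((k + 1) mod ?n)"
      then have "i = k" using H(1) k(1) assms(2) by (simp add: nth_eq_iff_index_eq)
      then show ?thesis using h by simp
    next
      assume h: "vs ! i = vs ! ((k + 1) mod ?n) \<and> w = vs ! k"
      then have "i = (k + 1) mod ?n" using H(1) kk assms(2) by (simp add: nth_eq_iff_index_eq)
      then have "k = (i + ?n - 1) mod ?n" using k(1) assms(2) nx_eq[OF k(1)] pv_eq[OF assms(2)] by (auto split: if_splits)
      then show ?thesis using h by simp
    qed
  next
    fix w assume w: "w \<in> H" "w = vs ! ((i + 1) mod ?n) \<or> w = vs ! ((i + ?n - 1) mod ?n)"
    from w(2) show "adj c S (vs ! i) w"
    proof
      assume "w = vs ! ((i + 1) mod ?n)" then show ?thesis using H(4) assms(2) by simp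
    next
      assume h: "w = vs ! ((i + ?n - 1) mod ?n)"
      define j where "j = (i + ?n - 1) mod ?n"
      have j: "j < ?n" unfolding j_def using n0 by simp
      have "(j + 1) mod ?n = i" unfolding j_def using assms(2) nx_eq[OF j[unfolded j_def]] pv_eq[OF assms(2)] by (auto split: if_splits)
      moreover have "adj c S (vs ! j) (vs ! ((j + 1) mod ?n))" using H(4) j by blast
      ultimately have "adj c S w (vs ! i)" using h unfolding j_def by simp
      then show ?thesis using adj_sym by metis
    qed
  qed
qed

lemma NB2: assumes "hl c S H vs" "v \<in> H"
  shows "\<exists>w1\<in>H. \<exists>w2\<in>H. w1 \<noteq> w2 \<and> (\<forall>w\<in>H. adj c S v w \<longleftrightarrow> w = w1 \<or> w = w2)"
proof -
  obtain i where "i < length vs" "vs ! i = v" using assms unfolding hl_def by (auto simp: in_set_conv_nth)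
  note N = NB[OF assms(1) \<open>i < length vs\<close>]
  show ?thesis using N \<open>vs ! i = v\<close> by blast
qed

lemma CONN: assumes "hl c S H vs" "j < length vs" "1 \<le> m" "m < length vs"
  "B = {vs ! ((j + t) mod length vs) | t. t < m}"
  "\<forall>v\<in>X. \<forall>w\<in>H. adj c S v w \<longrightarrow> w \<in> X \<or> w \<in> B"
  "x0 \<in> X" "x0 \<in> H" "x0 \<notin> B"
  shows "\<forall>v\<in>H. v \<notin> B \<longrightarrow> v \<in> X"
proof -
  let ?n = "length vs"
  have H: "distinct vs" "?n \<ge> 4" "set vs = H"
     "\<forall>i < ?n. adj c S (vs ! i) (vs ! ((i + 1) mod ?n))"
    using assms(1) unfolding hl_def by auto
  have n0: "?n > 0" using H(2) by linarith
  define seg where "seg t = vs ! ((j + m + t) mod ?n)" for t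
  have rep: "\<exists>t. t < ?n - m \<and> v = seg t" if vH: "v \<in> H" "v \<notin> B" for v
  proof -
    obtain k where k: "k < ?n" "v = vs ! k" using vH H(3) by (auto simp: in_set_conv_nth)
    define t where "t = (k + ?n - j) mod ?n"
    have t: "t < ?n" "v = vs ! ((j + t) mod ?n)" unfolding t_def using mod_back[OF assms(2) k(1)] k n0 by auto
    have "\<not> t < m" using t vH(2) assms(5) by blast
    then have e: "j + t = j + m + (t - m)" "t - m < ?n - m" using t by auto
    show ?thesis using e t(2) unfolding seg_def by (intro exI[of _ "t - m"]) simp
  qed
  have segB: "seg t \<notin> B" if "t < ?n - m" for t
  proof
    assume "seg t \<in> B"
    then obtain t' where t': "t' < m" "seg t = vs ! ((j + t') mod ?n)" using assms(5) by blast
    have "(j + (m + t)) mod ?n = (j + t') mod ?n"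
      using t' H(1) n0 unfolding seg_def by (simp add: nth_eq_iff_index_eq add.assoc)
    moreover have "m + t < ?n" "t' < ?n" using that t'(1) assms(4) by auto
    ultimately have "m + t = t'" using mod_cancel[of "m + t" ?n t' j] by blast
    then show False using t' by simp
  qed
  have segH: "seg t \<in> H" for t unfolding seg_def using H(3) n0 by auto
  have segadj: "adj c S (seg t) (seg (Suc t))" for t
  proof -
    have "((j + m + t) mod ?n + 1) mod ?n = (j + m + Suc t) mod ?n" by (simp add: mod_Suc_eq)
    moreover have "adj c S (vs ! ((j + m + t) mod ?n)) (vs ! (((j + m + t) mod ?n + 1) mod ?n))"
      using H(4) n0 by simp
    ultimately show ?thesis unfolding seg_def by simp
  qed
  obtain t0 where t0: "t0 < ?n - m" "x0 = seg t0" using rep assms(8,9) by blast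
  have "\<forall>t < ?n - m. seg t \<in> X"
  proof (rule seg_all[of "\<lambda>t. seg t \<in> X" t0])
    show "seg t0 \<in> X" using t0 assms(7) by simp
    show "t0 < ?n - m" using t0 by simp
    show "\<forall>t. Suc t < ?n - m \<longrightarrow> (seg t \<in> X) = (seg (Suc t) \<in> X)"
    proof (intro allI impI)
      fix t assume t: "Suc t < ?n - m"
      show "(seg t \<in> X) = (seg (Suc t) \<in> X)"
      proof
        assume st: "seg t \<in> X"
        have "seg (Suc t) \<in> X \<or> seg (Suc t) \<in> B" using assms(6) st segH[of "Suc t"] segadj[of t] by blast
        moreover have "seg (Suc t) \<notin> B" using segB[of "Suc t"] t by simp
        ultimately show "seg (Suc t) \<in> X" by blast
      next
        assume st: "seg (Suc t) \<in> X"
        have "adj c S (seg (Suc t)) (seg t)" using segadj[of t] adj_sym by metis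
        then have "seg t \<in> X \<or> seg t \<in> B" using assms(6) st segH[of t] by blast
        moreover have "seg t \<notin> B" using segB[of t] t by simp
        ultimately show "seg t \<in> X" by blast
      qed
    qed
  qed
  then show ?thesis using rep by auto
qed



context BT begin

lemma BIG: assumes hl: "hl c S H vs" and i: "i < length vs" and w: "w \<in> H" "w \<noteq> vs ! i" "anc (vs ! i) w"
  shows "\<forall>v\<in>H. v \<noteq> vs ! ((i + 1) mod length vs) \<longrightarrow> v \<noteq> vs ! ((i + length vs - 1) mod length vs) \<longrightarrow> anc (vs ! i) v"
proof -
  let ?n = "length vs"
  define z where "z = vs ! i"
  define a where "a = vs ! ((i + 1) mod ?n)"
  define b where "b = vs ! ((i + ?n - 1) mod ?n)"
  have H: "H \<subseteq> S" "distinct vs" "?n \<ge> 4" "set vs = H" using hl unfolding hl_def by auto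
  have n0: "?n > 0" using H(3) by linarith
  note N = NB[OF hl i, folded z_def a_def b_def]
  have zH: "z \<in> H" unfolding z_def using H(4) i by auto
  have zS: "z \<in> S" using zH H(1) by auto
  define j where "j = (i + ?n - 1) mod ?n"
  have j: "j < ?n" unfolding j_def using n0 by simp
  have j1: "(j + 1) mod ?n = i" unfolding j_def using i nx_eq[OF j[unfolded j_def]] pv_eq[OF i] by (auto split: if_splits)
  have j2: "(j + 2) mod ?n = (i + 1) mod ?n"
  proof -
    have "(j + 2) mod ?n = Suc ((j + 1) mod ?n) mod ?n" by (simp add: mod_Suc_eq)
    then show ?thesis using j1 by simp
  qed
  define B where "B = {vs ! ((j + t) mod ?n) | t. t < 3}"
  have hB: "B = {b, z, a}"
  proof (rule set_eqI, rule iffI)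
    fix x assume "x \<in> B"
    then obtain t where t: "t < 3" "x = vs ! ((j + t) mod ?n)" unfolding B_def by blast
    then have "t = 0 \<or> t = 1 \<or> t = 2" by arith
    then show "x \<in> {b, z, a}"
    proof (elim disjE)
      assume "t = 0" then have "x = vs ! j" using t j by simp
      then show ?thesis unfolding b_def j_def by simp
    next
      assume "t = 1" then have "x = vs ! i" using t j1 by simp
      then show ?thesis unfolding z_def by simp
    next
      assume "t = 2" then have "x = vs ! ((i + 1) mod ?n)" using t j2 by simp
      then show ?thesis unfolding a_def by simp
    qed
  next
    fix x assume "x \<in> {b, z, a}"
    then have "x = vs ! ((j + 0) mod ?n) \<or> x = vs ! ((j + 1) mod ?n) \<or> x = vs ! ((j + 2) mod ?n)"
      unfolding a_def b_def z_def using j j1 j2 unfolding j_def by auto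
    moreover have mem: "vs ! ((j + t) mod ?n) \<in> B" if "t < 3" for t unfolding B_def using that by blast
    ultimately show "x \<in> B" using mem[of 0] mem[of 1] mem[of 2] by auto
  qed
  define X where "X = {v \<in> H. anc z v \<and> v \<noteq> z}"
  have clo: "\<forall>v\<in>X. \<forall>w'\<in>H. adj c S v w' \<longrightarrow> w' \<in> X \<or> w' \<in> B"
  proof (intro ballI impI)
    fix v w' assume v: "v \<in> X" and w': "w' \<in> H" and ad: "adj c S v w'"
    have av: "anc z v" "v \<noteq> z" using v unfolding X_def by auto
    show "w' \<in> X \<or> w' \<in> B"
    proof (cases "anc z w'")
      case True
      have "w' \<noteq> z" using ad av adj_inc by blast
      then show ?thesis using True w' unfolding X_def by blast
    next
      case False
      have "arc c S w' z" using SEP[OF zS av(1) False ad] av(2) by blast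
      then have "adj c S z w'" unfolding adj_def by blast
      then have "w' = a \<or> w' = b" using N(1) w' by blast
      then show ?thesis using hB by blast
    qed
  qed
  have wX: "w \<in> X" using w unfolding X_def z_def by blast
  have wB: "w \<notin> B"
  proof -
    have "adj c S z a" "adj c S z b" using N by auto
    then have "w \<noteq> a" "w \<noteq> b" using w(3) adj_inc unfolding z_def by blast+
    then show ?thesis using hB w(2) unfolding z_def by blast
  qed
  have C: "\<forall>v\<in>H. v \<notin> B \<longrightarrow> v \<in> X"
    by (rule CONN[OF hl j _ _ B_def clo wX w(1) wB]) (use H(3) in auto)
  show ?thesis
  proof (intro ballI impI)
    fix v assume v: "v \<in> H" "v \<noteq> vs ! ((i + 1) mod ?n)" "v \<noteq> vs ! ((i + ?n - 1) mod ?n)"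
    show "anc (vs ! i) v"
    proof (cases "v = z")
      case True then show ?thesis using anc_refl zS SV unfolding z_def by auto
    next
      case False
      then have "v \<notin> B" using hB v unfolding a_def b_def by blast
      then show ?thesis using C v unfolding X_def z_def by blast
    qed
  qed
qed

lemma KEY: assumes hl: "hl c S H vs" and u: "u \<in> S" "u \<notin> H"
  and nb: "\<forall>w\<in>H. adj c S u w \<longrightarrow> w = b0" and x0: "x0 \<in> H" "x0 \<noteq> b0" "anc u x0"
  shows "\<forall>v\<in>H. v \<noteq> b0 \<longrightarrow> anc u v"
proof -
  let ?n = "length vs"
  have H: "H \<subseteq> S" "distinct vs" "?n \<ge> 4" "set vs = H"
    "\<forall>i < ?n. adj c S (vs ! i) (vs ! ((i + 1) mod ?n))" using hl unfolding hl_def by auto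
  have n0: "?n > 0" using H(3) by linarith
  define X where "X = {v \<in> H. anc u v}"
  have clo: "\<forall>v\<in>X. \<forall>w\<in>H. adj c S v w \<longrightarrow> w \<in> X \<or> w = b0"
  proof (intro ballI impI)
    fix v w assume v: "v \<in> X" and w: "w \<in> H" and ad: "adj c S v w"
    show "w \<in> X \<or> w = b0"
    proof (cases "anc u w")
      case True then show ?thesis using w unfolding X_def by blast
    next
      case False
      have "v \<noteq> u" using v u unfolding X_def by blast
      then have "arc c S w u" using SEP[OF u(1) _ False ad] v unfolding X_def by blast
      then have "adj c S u w" unfolding adj_def by blast
      then show ?thesis using nb w by blast
    qed
  qed
  have x0X: "x0 \<in> X" using x0 unfolding X_def by blast
  show ?thesis
  proof (cases "b0 \<in> H")
    case True
    then obtain j where j: "j < ?n" "vs ! j = b0" using H(4) by (auto simp: in_set_conv_nth)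
    define B where "B = {vs ! ((j + t) mod ?n) | t. t < (1::nat)}"
    have hB: "B = {b0}" unfolding B_def using j by auto
    have C: "\<forall>v\<in>H. v \<notin> B \<longrightarrow> v \<in> X"
      by (rule CONN[OF hl j(1) _ _ B_def _ x0X x0(1)]) (use H(3) clo hB x0 in auto)
    then show ?thesis using hB unfolding X_def by blast
  next
    case False
    then have clo2: "\<forall>v\<in>X. \<forall>w\<in>H. adj c S v w \<longrightarrow> w \<in> X" using clo by blast
    obtain k where k: "k < ?n" "vs ! k = x0" using x0(1) H(4) by (auto simp: in_set_conv_nth)
    define j where "j = (k + 1) mod ?n"
    have j: "j < ?n" unfolding j_def using n0 by simp
    have kj: "k \<noteq> j" unfolding j_def using nx_eq[OF k(1)] H(3) by auto
    define B where "B = {vs ! ((j + t) mod ?n) | t. t < (1::nat)}"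
    have hB: "B = {vs ! j}" unfolding B_def using j by auto
    have x0B: "x0 \<notin> B" using hB k kj H(2) j by (auto simp: nth_eq_iff_index_eq)
    have C: "\<forall>v\<in>H. v \<notin> B \<longrightarrow> v \<in> X"
      by (rule CONN[OF hl j _ _ B_def _ x0X x0(1) x0B]) (use H(3) clo2 in auto)
    have "adj c S x0 (vs ! j)" using H(5) k unfolding j_def by blast
    moreover have "vs ! j \<in> H" using H(4) j by auto
    ultimately have "vs ! j \<in> X" using clo2 x0X by blast
    then have "\<forall>v\<in>H. v \<in> X" using C hB by auto
    then show ?thesis unfolding X_def by blast
  qed
qed

end


context BT begin

lemma HS: assumes "hole c S H"
  shows "\<exists>z a b. z \<in> H \<and> a \<in> H \<and> b \<in> H \<and> a \<noteq> b \<and> (\<forall>v\<in>H. adj c S z v \<longleftrightarrow> v = a \<or> v = b) \<and>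
     arc c S a z \<and> arc c S b z \<and> (\<forall>v\<in>H. v \<noteq> a \<longrightarrow> v \<noteq> b \<longrightarrow> anc z v) \<and>
     (\<forall>v. hole_source c S H v \<longleftrightarrow> v = a \<or> v = b) \<and> pivot V r p c S H z \<and>
     (\<forall>w. pivot V r p c S H w \<longrightarrow> w = z)"
proof -
  obtain vs where hl: "hl c S H vs" using hole_hl[OF assms] by blast
  let ?n = "length vs"
  have H: "H \<subseteq> S" "distinct vs" "?n \<ge> 4" "set vs = H" using hl unfolding hl_def by auto
  have vne: "vs \<noteq> []" using H(3) by (cases vs) auto
  have fin: "finite H" "H \<noteq> {}" using H(4) vne by auto
  have adjS: "adj c S u v \<Longrightarrow> adj c S v u" for u v unfolding adj_def by blast
  have arcadj: "arc c S u v \<Longrightarrow> adj c S u v" for u v unfolding adj_def by blast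
  have st1: "\<exists>q\<in>H. \<exists>w1\<in>H. \<exists>w2\<in>H. w1 \<noteq> w2 \<and> arc c S q w1 \<and> arc c S q w2"
  proof -
    define m where "m = Min (dep ` H)"
    have "m \<in> dep ` H" unfolding m_def using fin by simp
    then obtain u0 where u0: "u0 \<in> H" "dep u0 = m" by blast
    have mle: "\<forall>w\<in>H. m \<le> dep w" unfolding m_def using fin by simp
    obtain w1 w2 where w: "w1 \<in> H" "w2 \<in> H" "w1 \<noteq> w2" "\<forall>w\<in>H. adj c S u0 w \<longleftrightarrow> w = w1 \<or> w = w2"
      using NB2[OF hl u0(1)] by blast
    show ?thesis
    proof (cases "arc c S u0 w1 \<and> arc c S u0 w2")
      case True then show ?thesis using u0 w by blast
    next
      case False
      then obtain t where t: "t \<in> H" "arc c S t u0"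
        using w unfolding adj_def by blast
      have dt: "dep t = m" using arc_dep(1)[OF t(2)] u0 mle t(1) by (meson le_antisym)
      obtain t1 t2 where tt: "t1 \<in> H" "t2 \<in> H" "t1 \<noteq> t2" "\<forall>w\<in>H. adj c S t w \<longleftrightarrow> w = t1 \<or> w = t2"
        using NB2[OF hl t(1)] by blast
      have "adj c S t u0" using arcadj t by blast
      then have "u0 = t1 \<or> u0 = t2" using tt u0 by blast
      then obtain t' where t': "t' \<in> H" "t' \<noteq> u0" "adj c S t t'" using tt by blast
      show ?thesis
      proof (cases "arc c S t t'")
        case True then show ?thesis using t t' u0 by blast
      next
        case False
        then have a: "arc c S t' t" using t'(3) unfolding adj_def by blast
        have "dep t' = dep t" using arc_dep(1)[OF a] dt mle t'(1) by (meson le_antisym)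
        then have "c t = {}" using arc_dep(2)[OF a] by simp
        then show ?thesis using t(2) unfolding arc_def by blast
      qed
    qed
  qed
  obtain z w where zw: "z \<in> H" "w \<in> H" "w \<noteq> z" "anc z w"
  proof -
    obtain q w1 w2 where q: "q \<in> H" "w1 \<in> H" "w2 \<in> H" "w1 \<noteq> w2" "arc c S q w1" "arc c S q w2"
      using st1 by blast
    have "anc w1 w2 \<or> anc w2 w1" using CMP[OF q(5,6)] .
    then show ?thesis using that q by metis
  qed
  obtain i where i: "i < ?n" "vs ! i = z" using zw(1) H(4) by (auto simp: in_set_conv_nth)
  define a where "a = vs ! ((i + 1) mod ?n)"
  define b where "b = vs ! ((i + ?n - 1) mod ?n)"
  note N = NB[OF hl i(1), unfolded i(2), folded a_def b_def]
  have abH: "a \<in> H" "b \<in> H" "a \<noteq> b" using N by auto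
  have zadj: "\<forall>v\<in>H. adj c S z v \<longleftrightarrow> v = a \<or> v = b" using N(1) by blast
  have bigz: "\<forall>v\<in>H. v \<noteq> a \<longrightarrow> v \<noteq> b \<longrightarrow> anc z v"
    using BIG[OF hl i(1) zw(2)] zw(3,4) i(2) a_def b_def by blast
  have zS: "z \<in> S" using zw(1) H(1) by blast
  have out: "arc c S x z \<and> (\<forall>y\<in>H. adj c S x y \<longrightarrow> arc c S x y)" if x: "x = a \<or> x = b" for x
  proof -
    have xH: "x \<in> H" using x abH by blast
    have zx: "adj c S z x" using zadj xH x by blast
    obtain x1 x2 where xx: "x1 \<in> H" "x2 \<in> H" "x1 \<noteq> x2" "\<forall>w\<in>H. adj c S x w \<longleftrightarrow> w = x1 \<or> w = x2"
      using NB2[OF hl xH] by blast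
    have "z = x1 \<or> z = x2" using xx adjS[OF zx] zw(1) by blast
    then obtain s where s: "s \<in> H" "s \<noteq> z" "adj c S x s" "\<forall>y\<in>H. adj c S x y \<longrightarrow> y = z \<or> y = s"
      using xx by metis
    have "s \<noteq> a \<and> s \<noteq> b"
    proof (rule ccontr)
      assume "\<not> (s \<noteq> a \<and> s \<noteq> b)"
      then have "s = a \<or> s = b" by blast
      then have "adj c S z s" using zadj s(1) by blast
      then show False using TF[OF zx s(3)] by blast
    qed
    then have zs: "anc z s" using bigz s(1) by blast
    have nzx: "\<not> anc z x" using adj_inc(1)[OF zx] .
    have "arc c S x z \<and> arc c S x s" using SEP[OF zS zs nzx adjS[OF s(3)]] s(2) by blast
    then show ?thesis using s(4) by blast
  qed
  have src_ab: "hole_source c S H x" if "x = a \<or> x = b" for x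
  proof -
    have "x \<in> H" using that abH by blast
    moreover have "\<not> (\<exists>u\<in>H. arc c S u x)"
    proof
      assume "\<exists>u\<in>H. arc c S u x"
      then obtain u where u: "u \<in> H" "arc c S u x" by blast
      then have "arc c S x u" using out[OF that] adjS[OF arcadj[OF u(2)]] by blast
      then show False using ORI u(2) by blast
    qed
    ultimately show ?thesis unfolding hole_source_def by blast
  qed
  have src: "hole_source c S H v \<longleftrightarrow> v = a \<or> v = b" for v
  proof
    assume sv: "hole_source c S H v"
    show "v = a \<or> v = b"
    proof (rule ccontr)
      assume nab: "\<not> (v = a \<or> v = b)"
      have vH: "v \<in> H" and noin: "\<not> (\<exists>u\<in>H. arc c S u v)" using sv unfolding hole_source_def by auto
      have "v \<noteq> z" using out[of a] abH(1) noin by blast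
      obtain v1 v2 where vv: "v1 \<in> H" "v2 \<in> H" "v1 \<noteq> v2" "\<forall>w\<in>H. adj c S v w \<longleftrightarrow> w = v1 \<or> w = v2"
        using NB2[OF hl vH] by blast
      have arcs: "arc c S v v1" "arc c S v v2" using vv noin unfolding adj_def by blast+
      have claim: "False" if w12: "w1 \<in> H" "w2 \<in> H" "w1 \<noteq> w2" "arc c S v w1" "anc w1 w2" for w1 w2
      proof -
        have "w1 \<noteq> z"
        proof
          assume "w1 = z"
          then have "adj c S z v" using adjS arcadj w12(4) by blast
          then show False using zadj vH nab by blast
        qed
        have "w1 \<noteq> a \<and> w1 \<noteq> b"
          using src_ab w12(4) vH unfolding hole_source_def by blast
        then have zw1: "anc z w1" using bigz w12(1) by blast
        obtain k where k: "k < ?n" "vs ! k = w1" using w12(1) H(4) by (auto simp: in_set_conv_nth)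
        note Nk = NB[OF hl k(1), unfolded k(2)]
        have bk: "\<forall>u\<in>H. u \<noteq> vs ! ((k + 1) mod ?n) \<longrightarrow> u \<noteq> vs ! ((k + ?n - 1) mod ?n) \<longrightarrow> anc w1 u"
          using BIG[OF hl k(1) w12(2)] w12(3,5) k(2) by blast
        have "\<not> adj c S w1 z"
        proof
          assume "adj c S w1 z"
          then have "adj c S z w1" using adjS by blast
          then show False using zadj w12(1) \<open>w1 \<noteq> a \<and> w1 \<noteq> b\<close> by blast
        qed
        then have "z \<noteq> vs ! ((k + 1) mod ?n)" "z \<noteq> vs ! ((k + ?n - 1) mod ?n)"
          using Nk(1) zw(1) by blast+
        then have "anc w1 z" using bk zw(1) by blast
        then show False using anc_antisym zw1 \<open>w1 \<noteq> z\<close> by blast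
      qed
      show False using CMP[OF arcs] claim vv arcs by metis
    qed
  next
    assume "v = a \<or> v = b"
    then show "hole_source c S H v" using src_ab by blast
  qed
  have sink: "hole_sink c S H z"
  proof -
    have "\<not> (\<exists>u\<in>H. arc c S z u)"
    proof
      assume "\<exists>u\<in>H. arc c S z u"
      then obtain u where u: "u \<in> H" "arc c S z u" by blast
      then have "u = a \<or> u = b" using zadj arcadj by blast
      then have "arc c S u z" using out by blast
      then show False using ORI u(2) by blast
    qed
    then show ?thesis unfolding hole_sink_def using zw(1) by blast
  qed
  have piv: "pivot V r p c S H z"
    unfolding pivot_def
  proof (intro conjI allI impI ballI)
    show "hole_sink c S H z" using sink .
  next
    fix x assume "hole_source c S H x"
    then have "x = a \<or> x = b" using src by blast
    then show "adj c S z x" using zadj abH by blast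
  next
    fix v assume "v \<in> H" "\<not> hole_source c S H v"
    then have "v \<noteq> a" "v \<noteq> b" using src by blast+
    then show "ancestor V r p z v" using bigz \<open>v \<in> H\<close> ancestor_anc by blast
  qed
  have uniq: "\<forall>w. pivot V r p c S H w \<longrightarrow> w = z"
  proof (intro allI impI)
    fix w assume pw: "pivot V r p c S H w"
    then have ws: "hole_sink c S H w" and wanc: "\<forall>v\<in>H. \<not> hole_source c S H v \<longrightarrow> ancestor V r p w v"
      unfolding pivot_def by blast+
    have wH: "w \<in> H" and wno: "\<not> (\<exists>u\<in>H. arc c S w u)" using ws unfolding hole_sink_def by auto
    have "w \<noteq> a" "w \<noteq> b" using wno out zw(1) by blast+
    then have zw': "anc z w" using bigz wH by blast
    have "\<not> hole_source c S H z" using out[of a] abH(1) unfolding hole_source_def by blast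
    then have "anc w z" using wanc zw(1) ancestor_anc by blast
    then show "w = z" using anc_antisym zw' by blast
  qed
  show ?thesis
    apply (rule exI[of _ z], rule exI[of _ a], rule exI[of _ b])
    using zw(1) abH zadj out bigz src piv uniq by blast
qed

end


context BT begin

lemma SUB: assumes hl': "hl c S H' vs'" and HH: "H \<inter> H' = {z, y'}"
  and edge: "\<forall>u v. adj c S u v \<longrightarrow> ({u, v} \<subseteq> H \<or> {u, v} \<subseteq> H')" and HSS: "H \<subseteq> S"
  and y1: "y1 \<in> H" "y1 \<notin> H'" and y2: "y2 \<in> H'" and ar: "arc c S y' y1" "arc c S y' y2"
  and a12: "anc y1 y2" and zy: "z \<in> H" "y' \<in> H" "y' \<noteq> z"
  and zanc: "\<forall>v\<in>H. \<not> hole_source c S H v \<longrightarrow> anc z v"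
  shows False
proof -
  have "\<not> hole_source c S H y1" using ar(1) zy(2) unfolding hole_source_def by blast
  then have zy1: "anc z y1" using zanc y1(1) by blast
  have y1S: "y1 \<in> S" using y1 HSS by blast
  have nb: "\<forall>w\<in>H'. adj c S y1 w \<longrightarrow> w = y'"
  proof (intro ballI impI)
    fix w assume w: "w \<in> H'" "adj c S y1 w"
    then have "{y1, w} \<subseteq> H" using edge y1(2) by blast
    then have "w \<in> {z, y'}" using HH w(1) by blast
    moreover have "w \<noteq> z" using adj_inc(2)[OF w(2)] zy1 by blast
    ultimately show "w = y'" by blast
  qed
  have y2n: "y2 \<noteq> y'" using adj_neq[of y' y2] ar(2) unfolding adj_def by blast
  have "\<forall>v\<in>H'. v \<noteq> y' \<longrightarrow> anc y1 v" using KEY[OF hl' y1S y1(2) nb y2 y2n a12] .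
  moreover have "z \<in> H'" using HH by blast
  moreover have "z \<noteq> y'" using zy(3) by simp
  ultimately have "anc y1 z" by blast
  then have "y1 = z" using anc_antisym zy1 by blast
  then show False using y1(2) \<open>z \<in> H'\<close> by blast
qed

lemma CASE1: assumes h: "hole c S H" "hole c S H'" and HH: "H \<inter> H' = {x, y}" and xy: "x \<noteq> y" "adj c S x y"
  and edge: "\<forall>u v. adj c S u v \<longrightarrow> ({u, v} \<subseteq> H \<or> {u, v} \<subseteq> H')"
  and pz: "pivot V r p c S H z" and zxy: "z \<in> {x, y}"
  shows "subordinate V r p c S H' z"
proof -
  obtain z0 a b where S1: "z0 \<in> H" "a \<in> H" "b \<in> H" "a \<noteq> b" "\<forall>v\<in>H. adj c S z0 v \<longleftrightarrow> v = a \<or> v = b"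
     "arc c S a z0" "arc c S b z0" "\<forall>v\<in>H. v \<noteq> a \<longrightarrow> v \<noteq> b \<longrightarrow> anc z0 v"
     "\<forall>v. hole_source c S H v \<longleftrightarrow> v = a \<or> v = b" "pivot V r p c S H z0"
     "\<forall>w. pivot V r p c S H w \<longrightarrow> w = z0"
    using HS[OF h(1)] by blast
  obtain z' a' b' where S2: "z' \<in> H'" "a' \<in> H'" "b' \<in> H'" "a' \<noteq> b'" "\<forall>v\<in>H'. adj c S z' v \<longleftrightarrow> v = a' \<or> v = b'"
     "arc c S a' z'" "arc c S b' z'" "\<forall>v\<in>H'. v \<noteq> a' \<longrightarrow> v \<noteq> b' \<longrightarrow> anc z' v"
     "\<forall>v. hole_source c S H' v \<longleftrightarrow> v = a' \<or> v = b'" "pivot V r p c S H' z'"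
     "\<forall>w. pivot V r p c S H' w \<longrightarrow> w = z'"
    using HS[OF h(2)] by blast
  have zz: "z = z0" using S1(11) pz by blast
  obtain hl1 where hl1: "hl c S H hl1" using hole_hl[OF h(1)] by blast
  obtain hl2 where hl2: "hl c S H' hl2" using hole_hl[OF h(2)] by blast
  have HS1: "H \<subseteq> S" using hl1 unfolding hl_def by blast
  have HS2: "H' \<subseteq> S" using hl2 unfolding hl_def by blast
  define y' where "y' = (if z = x then y else x)"
  have y': "y' \<noteq> z" "H \<inter> H' = {z, y'}" "adj c S z y'" using xy zxy HH unfolding y'_def adj_def by auto
  have y'H: "y' \<in> H" "y' \<in> H'" "z \<in> H" "z \<in> H'" using y'(2) by auto
  have "y' = a \<or> y' = b" using S1(5) y'(3) y'H(1) zz by blast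
  then have ay: "arc c S y' z" using S1(6,7) zz by blast
  have ns: "\<not> hole_source c S H' z" using ay y'H(2) unfolding hole_source_def by blast
  have np: "\<not> pivot V r p c S H' z"
  proof
    assume "pivot V r p c S H' z"
    then have zz': "z = z'" using S2(11) by blast
    have "y' = a' \<or> y' = b'" using S2(5) y'(3) y'H(2) zz' by blast
    then have src2: "hole_source c S H' y'" using S2(9) by blast
    have "y' = a \<or> y' = b" using S1(5) y'(3) y'H(1) zz by blast
    then have src1: "hole_source c S H y'" using S1(9) by blast
    have yz: "adj c S y' z" using y'(3) unfolding adj_def by blast
    obtain y1 where y1: "y1 \<in> H" "y1 \<noteq> z" "adj c S y' y1"
    proof -
      obtain w1 w2 where "w1 \<in> H" "w2 \<in> H" "w1 \<noteq> w2" "\<forall>w\<in>H. adj c S y' w \<longleftrightarrow> w = w1 \<or> w = w2"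
        using NB2[OF hl1 y'H(1)] by blast
      then show ?thesis using that yz y'H(3) by metis
    qed
    obtain y2 where y2: "y2 \<in> H'" "y2 \<noteq> z" "adj c S y' y2"
    proof -
      obtain w1 w2 where "w1 \<in> H'" "w2 \<in> H'" "w1 \<noteq> w2" "\<forall>w\<in>H'. adj c S y' w \<longleftrightarrow> w = w1 \<or> w = w2"
        using NB2[OF hl2 y'H(2)] by blast
      then show ?thesis using that yz y'H(4) by metis
    qed
    have a1: "arc c S y' y1" using y1 src1 unfolding adj_def hole_source_def by blast
    have a2: "arc c S y' y2" using y2 src2 unfolding adj_def hole_source_def by blast
    have "y1 \<noteq> y'" "y2 \<noteq> y'" using adj_neq y1(3) y2(3) by blast+
    then have n1: "y1 \<notin> H'" and n2: "y2 \<notin> H" using y'(2) y1 y2 by blast+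
    have zanc1: "\<forall>v\<in>H. \<not> hole_source c S H v \<longrightarrow> anc z v" using S1(8,9) zz by blast
    have zanc2: "\<forall>v\<in>H'. \<not> hole_source c S H' v \<longrightarrow> anc z v" using S2(8,9) zz' by blast
    have HH': "H' \<inter> H = {z, y'}" using y'(2) by blast
    have edge': "\<forall>u v. adj c S u v \<longrightarrow> ({u, v} \<subseteq> H' \<or> {u, v} \<subseteq> H)" using edge by blast
    have "anc y1 y2 \<or> anc y2 y1" using CMP[OF a1 a2] .
    then show False
    proof
      assume "anc y1 y2"
      then show False using SUB[OF hl2 y'(2) edge HS1 y1(1) n1 y2(1) a1 a2 _ y'H(3) y'H(1) y'(1) zanc1] by blast
    next
      assume "anc y2 y1"
      then show False using SUB[OF hl1 HH' edge' HS2 y2(1) n2 y1(1) a2 a1 _ y'H(4) y'H(2) y'(1) zanc2] by blast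
    qed
  qed
  show ?thesis unfolding subordinate_def using y'H(4) ns np by blast
qed

lemma CASE2: assumes h: "hole c S H" "hole c S H'" and HH: "H \<inter> H' = {x, y}" and xy: "x \<noteq> y" "adj c S x y"
  and edge: "\<forall>u v. adj c S u v \<longrightarrow> ({u, v} \<subseteq> H \<or> {u, v} \<subseteq> H')"
  and S1: "z \<in> H" "a \<in> H" "b \<in> H" "\<forall>v\<in>H. adj c S z v \<longleftrightarrow> v = a \<or> v = b"
     "\<forall>v\<in>H. v \<noteq> a \<longrightarrow> v \<noteq> b \<longrightarrow> anc z v" "a \<noteq> b"
  and zn: "z \<notin> H'"
  shows "\<forall>v\<in>H'. v \<noteq> a \<longrightarrow> v \<noteq> b \<longrightarrow> anc z v"
proof -
  obtain hl2 where hl2: "hl c S H' hl2" using hole_hl[OF h(2)] by blast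
  have HS1: "H \<subseteq> S" using h(1) unfolding hole_def by blast
  have zS: "z \<in> S" using S1(1) HS1 by blast
  have za: "adj c S z a" "adj c S z b" using S1 by blast+
  have nboth: "\<not> (a \<in> H' \<and> b \<in> H')"
  proof
    assume "a \<in> H' \<and> b \<in> H'"
    then have "a \<in> {x, y}" "b \<in> {x, y}" using HH S1(2,3) by blast+
    moreover have "a \<noteq> b" using S1(6) .
    ultimately have "adj c S a b" using xy unfolding adj_def by blast
    then show False using TF[OF za(1) _ za(2)] by blast
  qed
  obtain w where w: "w \<in> {x, y}" "w \<noteq> a" "w \<noteq> b"
  proof -
    have "x \<in> H'" "y \<in> H'" using HH by blast+
    then show ?thesis using that nboth xy(1) by blast
  qed
  have wH: "w \<in> H" "w \<in> H'" using w(1) HH by blast+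
  have zw: "anc z w" using S1(5) wH(1) w by blast
  define b0 where "b0 = (if a \<in> H' then a else b)"
  have nb: "\<forall>w'\<in>H'. adj c S z w' \<longrightarrow> w' = b0"
  proof (intro ballI impI)
    fix w' assume w': "w' \<in> H'" "adj c S z w'"
    then have "{z, w'} \<subseteq> H" using edge zn by blast
    then have "w' = a \<or> w' = b" using S1(4) w'(2) by blast
    then show "w' = b0" using w'(1) nboth unfolding b0_def by auto
  qed
  have wb0: "w \<noteq> b0" using w unfolding b0_def by auto
  have K: "\<forall>v\<in>H'. v \<noteq> b0 \<longrightarrow> anc z v" using KEY[OF hl2 zS zn nb wH(2) wb0 zw] .
  show ?thesis
  proof (intro ballI impI)
    fix v assume "v \<in> H'" "v \<noteq> a" "v \<noteq> b"
    moreover have "v \<noteq> b0" using calculation unfolding b0_def by auto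
    ultimately show "anc z v" using K by blast
  qed
qed

end


theorem lemma6p3:
  fixes V :: "'a set" and r :: 'a and p l :: "'a \<Rightarrow> 'a" and c :: "'a \<Rightarrow> 'a set"
    and S H1 H2 :: "'a set" and x y :: 'a
  assumes "burling_tree V r p l c"
    and "S \<subseteq> V"
    and "is_domino c S H1 H2 x y"
  shows "\<exists>z\<in>{x, y}. \<exists>i\<in>{1::nat, 2}.
           (let Hi = (if i = 1 then H1 else H2); Hj = (if i = 1 then H2 else H1) in
             pivot V r p c S Hi z \<and> subordinate V r p c S Hj z)"
proof -
  interpret BT V r p l c S using assms(1,2) by (unfold_locales) auto
  have D: "S = H1 \<union> H2" "hole c S H1" "hole c S H2" "x \<noteq> y" "adj c S x y" "H1 \<inter> H2 = {x, y}"
    "\<forall>u v. adj c S u v \<longrightarrow> ({u, v} \<subseteq> H1 \<or> {u, v} \<subseteq> H2)"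
    using assms(3) unfolding is_domino_def by blast+
  have D': "H2 \<inter> H1 = {x, y}" "\<forall>u v. adj c S u v \<longrightarrow> ({u, v} \<subseteq> H2 \<or> {u, v} \<subseteq> H1)"
    using D(6,7) by blast+
  obtain z1 a1 b1 where S1: "z1 \<in> H1" "a1 \<in> H1" "b1 \<in> H1" "a1 \<noteq> b1" "\<forall>v\<in>H1. adj c S z1 v \<longleftrightarrow> v = a1 \<or> v = b1"
     "arc c S a1 z1" "arc c S b1 z1" "\<forall>v\<in>H1. v \<noteq> a1 \<longrightarrow> v \<noteq> b1 \<longrightarrow> anc z1 v"
     "\<forall>v. hole_source c S H1 v \<longleftrightarrow> v = a1 \<or> v = b1" "pivot V r p c S H1 z1"
     "\<forall>w. pivot V r p c S H1 w \<longrightarrow> w = z1"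
    using HS[OF D(2)] by blast
  obtain z2 a2 b2 where S2: "z2 \<in> H2" "a2 \<in> H2" "b2 \<in> H2" "a2 \<noteq> b2" "\<forall>v\<in>H2. adj c S z2 v \<longleftrightarrow> v = a2 \<or> v = b2"
     "arc c S a2 z2" "arc c S b2 z2" "\<forall>v\<in>H2. v \<noteq> a2 \<longrightarrow> v \<noteq> b2 \<longrightarrow> anc z2 v"
     "\<forall>v. hole_source c S H2 v \<longleftrightarrow> v = a2 \<or> v = b2" "pivot V r p c S H2 z2"
     "\<forall>w. pivot V r p c S H2 w \<longrightarrow> w = z2"
    using HS[OF D(3)] by blast
  show ?thesis
  proof (cases "z1 \<in> {x, y}")
    case True
    have "subordinate V r p c S H2 z1" using CASE1[OF D(2,3,6,4,5,7) S1(10) True] .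
    then show ?thesis using True S1(10) by (intro bexI[of _ z1] bexI[of _ "1::nat"]) auto
  next
    case F1: False
    show ?thesis
    proof (cases "z2 \<in> {x, y}")
      case True
      have xy': "adj c S y x" using D(5) unfolding adj_def by blast
      have T': "z2 \<in> {y, x}" using True by blast
      have "subordinate V r p c S H1 z2"
        using CASE1[OF D(3,2) _ _ xy' D'(2) S2(10) T'] D'(1) D(4) by (metis insert_commute)
      then show ?thesis using True S2(10) by (intro bexI[of _ z2] bexI[of _ "2::nat"]) auto
    next
      case F2: False
      have z1n: "z1 \<notin> H2" using F1 D(6) S1(1) by blast
      have z2n: "z2 \<notin> H1" using F2 D(6) S2(1) by blast
      have A1: "\<forall>v\<in>H2. v \<noteq> a1 \<longrightarrow> v \<noteq> b1 \<longrightarrow> anc z1 v"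
        using CASE2[OF D(2,3,6,4,5,7) S1(1,2,3,5,8,4) z1n] .
      have xy': "adj c S y x" using D(5) unfolding adj_def by blast
      have HH2: "H2 \<inter> H1 = {y, x}" using D(6) by blast
      have A2: "\<forall>v\<in>H1. v \<noteq> a2 \<longrightarrow> v \<noteq> b2 \<longrightarrow> anc z2 v"
        using CASE2[OF D(3,2) HH2 D(4)[symmetric] xy' D'(2) S2(1,2,3,5,8,4) z2n] .
      have "z2 \<noteq> a1" "z2 \<noteq> b1" using z2n S1(2,3) by blast+
      then have "anc z1 z2" using A1 S2(1) by blast
      moreover have "z1 \<noteq> a2" "z1 \<noteq> b2" using z1n S2(2,3) by blast+
      then have "anc z2 z1" using A2 S1(1) by blast
      ultimately have "z1 = z2" using anc_antisym by blast
      then show ?thesis using z1n S2(1) by blast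
    qed
  qed
qed

end
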